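(* Let $t$ be the Thue–Morse word. For every $n\geq 2$, one has $f_{aa}(n)\geq n-1$ and $f_{ab}(n)\geq n-1$.
   Context: The Thue–Morse word $t=0110100110010110\cdots$ is the fixed point starting with $0$ of the substitution $\mu:0\mapsto 01,\ 1\mapsto 10$. $f_{aa}(n)$ (resp. $f_{ab}(n)$) denotes the number of distinct factors of $t$ of length $n$ that begin and end with the same letter (resp. with different letters). *)

theory Defs
  imports Main
begin

fun mu_letter :: "nat \<Rightarrow> nat list" where
  "mu_letter a = (if a = 0 then [0, 1] else [1, 0])"

definition mu :: "nat list \<Rightarrow> nat list" where
  "mu w = concat (map mu_letter w)"

text \<open>The Thue--Morse word t, the fixed point of mu starting with 0:
  its n-th letter (0-indexed) is the n-th letter of mu^(n+1)(0), which has length 2^(n+1) > n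
  and is a prefix of all further iterates.\<close>
definition thue_morse :: "nat \<Rightarrow> nat" where
  "thue_morse n = ((mu ^^ Suc n) [0]) ! n"

definition tm_factor :: "nat \<Rightarrow> nat \<Rightarrow> nat list" where
  "tm_factor i n = map thue_morse [i..<i + n]"

definition tm_factors :: "nat \<Rightarrow> nat list set" where
  "tm_factors n = {w. \<exists>i. w = tm_factor i n}"

definition f_aa :: "nat \<Rightarrow> nat" where
  "f_aa n = card {w \<in> tm_factors n. hd w = last w}"

definition f_ab :: "nat \<Rightarrow> nat" where
  "f_ab n = card {w \<in> tm_factors n. hd w \<noteq> last w}"

end

theory Submission
  imports Defs
begin

function tmf :: "nat \<Rightarrow> nat" where
  "tmf n = (if n = 0 then 0 else if even n then tmf (n div 2) else 1 - tmf (n div 2))"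
  by auto
termination by (relation "measure id") auto

declare tmf.simps [simp del]

lemma tmf_le: "tmf k \<le> 1"
  by (induction k rule: tmf.induct) (subst tmf.simps, auto)

lemma tmf_01: "tmf k = 0 \<or> tmf k = 1"
  using tmf_le[of k] by auto

lemma tmf_even: "tmf (2*k) = tmf k"
  by (cases "k = 0") (simp, subst tmf.simps, simp)

lemma tmf_odd: "tmf (2*k+1) = 1 - tmf k"
  by (subst tmf.simps) simp

lemma tmf_odd': "tmf (Suc (2*k)) = 1 - tmf k"
  using tmf_odd by simp

lemma mu_letter_tmf: "mu_letter (tmf N) = [tmf N, 1 - tmf N]"
  using tmf_le[of N] by (cases "tmf N") auto

lemma mu_map: "mu (map tmf [0..<N]) = map tmf [0..<2*N]"
proof (induction N)
  case 0 then show ?case by (simp add: mu_def)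
next
  case (Suc N)
  have "[0..<2*Suc N] = [0..<2*N] @ [2*N, 2*N+1]" by simp
  moreover have "mu (map tmf [0..<Suc N]) = mu (map tmf [0..<N]) @ mu_letter (tmf N)"
    by (simp add: mu_def)
  ultimately show ?case using Suc by (simp add: mu_letter_tmf tmf_even tmf_odd' del: mu_letter.simps)
qed

lemma mu_pow: "(mu ^^ m) [0] = map tmf [0..<2^m]"
proof (induction m)
  case 0 then show ?case by (simp add: tmf.simps)
next
  case (Suc m) then show ?case by (simp add: mu_map)
qed

lemma tm_eq: "thue_morse n = tmf n"
proof -
  have "n < 2 ^ Suc n" by (metis less_exp less_trans power_strict_increasing_iff lessI one_less_numeral_iff semiring_norm(76))
  then show ?thesis unfolding thue_morse_def mu_pow by simp
qed

definition fac :: "nat \<Rightarrow> nat \<Rightarrow> nat list" where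
  "fac i n = map tmf [i..<i+n]"

lemma fac_len[simp]: "length (fac i n) = n" by (simp add: fac_def)
lemma fac_nth[simp]: "m < n \<Longrightarrow> fac i n ! m = tmf (i+m)" by (simp add: fac_def)

definition PP :: "nat \<Rightarrow> nat set" where "PP n = {i. tmf i = tmf (i+n-1)}"
definition QQ :: "nat \<Rightarrow> nat set" where "QQ n = {i. tmf i \<noteq> tmf (i+n-1)}"

lemma fin_fac: "finite (range (\<lambda>i. fac i n))"
proof -
  have "range (\<lambda>i. fac i n) \<subseteq> {xs. set xs \<subseteq> {0,1} \<and> length xs = n}"
  proof (auto simp: fac_def)
    fix x assume "0 < tmf x" then show "tmf x = Suc 0" using tmf_01[of x] by auto
  qed
  moreover have "finite {xs. set xs \<subseteq> {0::nat,1} \<and> length xs = n}"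
    by (rule finite_lists_length_eq) simp
  ultimately show ?thesis by (rule finite_subset)
qed

lemma fin_sub: "finite ((\<lambda>i. fac i n) ` X)"
  by (rule finite_subset[OF _ fin_fac]) auto

lemma card_le_via: "finite Y \<Longrightarrow> S \<subseteq> h ` Y \<Longrightarrow> card S \<le> card Y"
  by (meson card_image_le card_mono finite_imageI order_trans)

lemma f_aa_eq: "n \<ge> 1 \<Longrightarrow> f_aa n = card ((\<lambda>i. fac i n) ` PP n)"
proof -
  assume n: "n \<ge> 1"
  have "{w \<in> tm_factors n. hd w = last w} = (\<lambda>i. fac i n) ` PP n"
  proof -
    have h: "hd (fac i n) = tmf i" "last (fac i n) = tmf (i+n-1)" for i
      using n by (auto simp: fac_def hd_map last_map)
    have "tm_factor i n = fac i n" for i by (simp add: tm_factor_def fac_def tm_eq)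
    then show ?thesis using h by (auto simp: tm_factors_def PP_def)
  qed
  then show ?thesis by (simp add: f_aa_def)
qed

lemma f_ab_eq: "n \<ge> 1 \<Longrightarrow> f_ab n = card ((\<lambda>i. fac i n) ` QQ n)"
proof -
  assume n: "n \<ge> 1"
  have "{w \<in> tm_factors n. hd w \<noteq> last w} = (\<lambda>i. fac i n) ` QQ n"
  proof -
    have h: "hd (fac i n) = tmf i" "last (fac i n) = tmf (i+n-1)" for i
      using n by (auto simp: fac_def hd_map last_map)
    have "tm_factor i n = fac i n" for i by (simp add: tm_factor_def fac_def tm_eq)
    then show ?thesis using h by (auto simp: tm_factors_def QQ_def)
  qed
  then show ?thesis by (simp add: f_ab_def)
qed

lemma no_cube: assumes "tmf j = tmf (j+1)" "tmf (j+1) = tmf (j+2)" shows False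
proof (cases "even j")
  case True
  then obtain m where "j = 2*m" by blast
  then have "tmf j = tmf m" "tmf (j+1) = 1 - tmf m" using tmf_even[of m] tmf_odd[of m] by simp_all
  then show False using assms tmf_01[of m] by auto
next
  case False
  then obtain m where j: "j = 2*m+1" using oddE by blast
  have "j+1 = 2*(m+1)" "j+2 = 2*(m+1)+1" using j by simp_all
  then have "tmf (j+1) = tmf (m+1)" "tmf (j+2) = 1 - tmf (m+1)"
    using tmf_even[of "m+1"] tmf_odd[of "m+1"] by simp_all
  then show False using assms tmf_01[of "m+1"] by auto
qed

lemma disj: "L \<ge> 4 \<Longrightarrow> fac (2*i) L = fac (2*j+1) L \<Longrightarrow> False"
proof -
  assume L: "L \<ge> 4" and e: "fac (2*i) L = fac (2*j+1) L"
  have q: "tmf (2*i+m) = tmf (2*j+1+m)" if "m < 4" for m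
    using e L that fac_nth[of m L] by (metis less_le_trans)
  have a: "tmf (2*i+2*a) = tmf (i+a)" "tmf (2*i+2*a+1) = 1 - tmf (i+a)" for a
    using tmf_even[of "i+a"] tmf_odd[of "i+a"] by (simp_all add: algebra_simps)
  have b: "tmf (2*j+1+2*a) = 1 - tmf (j+a)" "tmf (2*j+1+2*a+1) = tmf (j+a+1)" for a
    using tmf_odd[of "j+a"] tmf_even[of "j+a+1"] by (simp_all add: algebra_simps)
  have e0: "tmf i = 1 - tmf j" using q[of 0] a(1)[of 0] b(1)[of 0] by simp
  have e1: "1 - tmf i = tmf (j+1)" using q[of 1] a(2)[of 0] b(2)[of 0] by simp
  have e2: "tmf (i+1) = 1 - tmf (j+1)" using q[of 2] a(1)[of 1] b(1)[of 1] by simp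
  have e3: "1 - tmf (i+1) = tmf (j+2)" using q[of 3] a(2)[of 1] b(2)[of 1] by (simp add: numeral_eq_Suc)
  show False using e0 e1 e2 e3 tmf_le[of i] tmf_le[of j] tmf_le[of "i+1"] tmf_le[of "j+1"]
      tmf_le[of "j+2"] no_cube[of j] by linarith
qed

lemma combine:
  assumes "finite Z" "Ye \<union> Yo \<subseteq> Z" "Ye \<inter> Yo = {}" "S1 \<subseteq> h1 ` Ye" "S2 \<subseteq> h2 ` Yo"
  shows "card S1 + card S2 \<le> card Z"
proof -
  have f: "finite Ye" "finite Yo" using assms(1,2) finite_subset by blast+
  have "card S1 \<le> card Ye" using card_le_via[OF f(1) assms(4)] .
  moreover have "card S2 \<le> card Yo" using card_le_via[OF f(2) assms(5)] .
  moreover have "card Ye + card Yo = card (Ye \<union> Yo)" using card_Un_disjoint[OF f assms(3)] by simp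
  moreover have "card (Ye \<union> Yo) \<le> card Z" using card_mono[OF assms(1,2)] .
  ultimately show ?thesis by linarith
qed

lemma tmf_ev2: "tmf (2*i+2*j) = tmf (i+j)"
  using tmf_even[of "i+j"] by (simp add: distrib_left)
lemma tmf_od2: "tmf (2*i+2*j+1) = 1 - tmf (i+j)"
  using tmf_odd[of "i+j"] by (simp add: distrib_left)
lemma tmf_flip: "tmf a \<noteq> tmf b \<longleftrightarrow> tmf a = 1 - tmf b" "tmf a = tmf b \<longleftrightarrow> 1 - tmf a = 1 - tmf b"
  using tmf_01[of a] tmf_01[of b] by auto

lemma disjY: "L \<ge> 4 \<Longrightarrow> (\<lambda>i. fac (2*i) L) ` A \<inter> (\<lambda>i. fac (2*i+1) L) ` B = {}"
  using disj by blast

lemma even_step: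
  assumes k: "k \<ge> 2"
  shows "card ((\<lambda>i. fac i k) ` QQ k) + card ((\<lambda>i. fac i (k+1)) ` QQ (k+1)) \<le> card ((\<lambda>i. fac i (2*k)) ` PP (2*k))"
   and "card ((\<lambda>i. fac i k) ` PP k) + card ((\<lambda>i. fac i (k+1)) ` PP (k+1)) \<le> card ((\<lambda>i. fac i (2*k)) ` QQ (2*k))"
proof -
  let ?he = "\<lambda>W. map (\<lambda>j. W ! (2*j)) [0..<k]"
  let ?ho = "\<lambda>W. map (\<lambda>j. if j = 0 then 1 - W ! 0 else W ! (2*j-1)) [0..<k+1]"
  have he: "fac i k = ?he (fac (2*i) (2*k))" for i
    by (rule nth_equalityI) (simp_all add: tmf_ev2)
  have ho: "fac i (k+1) = ?ho (fac (2*i+1) (2*k))" for i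
  proof (rule nth_equalityI)
    fix j assume "j < length (fac i (k+1))"
    then have j: "j < k+1" by simp
    show "fac i (k+1) ! j = ?ho (fac (2*i+1) (2*k)) ! j"
    proof (cases "j = 0")
      case True
      have "?ho (fac (2*i+1) (2*k)) ! 0 = 1 - tmf (2*i+1)" using k by (simp del: upt_Suc)
      then show ?thesis using True k tmf_odd[of i] tmf_01[of i] by auto
    next
      case False
      then have "2*i+1+(2*j-1) = 2*i+2*j" by simp
      then show ?thesis using False j k by (simp add: tmf_ev2 del: upt_Suc)
    qed
  qed simp
  have ix1: "2*i+2*k-1 = 2*i+2*(k-1)+1" "i+k-1 = i+(k-1)" for i using k by simp_all
  have ix2: "2*i+1+2*k-1 = 2*i+2*k" "i+(k+1)-1 = i+k" for i using k by simp_all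
  show "card ((\<lambda>i. fac i k) ` QQ k) + card ((\<lambda>i. fac i (k+1)) ` QQ (k+1)) \<le> card ((\<lambda>i. fac i (2*k)) ` PP (2*k))"
  proof (rule combine[OF fin_sub _ disjY[of "2*k" "QQ k" "QQ (k+1)"]])
    show "(\<lambda>i. fac (2*i) (2*k)) ` QQ k \<union> (\<lambda>i. fac (2*i+1) (2*k)) ` QQ (k+1) \<subseteq> (\<lambda>i. fac i (2*k)) ` PP (2*k)"
    proof -
      have "2*i \<in> PP (2*k)" if "i \<in> QQ k" for i
      proof -
        have "tmf (2*i) = tmf i" using tmf_even .
        moreover have "tmf (2*i+2*k-1) = 1 - tmf (i+k-1)" using tmf_od2[of i "k-1"] ix1 by simp
        ultimately show ?thesis using that tmf_01[of i] tmf_01[of "i+k-1"] unfolding PP_def QQ_def by auto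
      qed
      moreover have "2*i+1 \<in> PP (2*k)" if "i \<in> QQ (k+1)" for i
      proof -
        have "tmf (2*i+1) = 1 - tmf i" using tmf_odd .
        moreover have "tmf (2*i+1+2*k-1) = tmf (i+k)" using tmf_ev2[of i k] ix2 by simp
        ultimately show ?thesis using that tmf_01[of i] tmf_01[of "i+k"] unfolding PP_def QQ_def by auto
      qed
      ultimately show ?thesis by blast
    qed
    show "(\<lambda>i. fac i k) ` QQ k \<subseteq> ?he ` (\<lambda>i. fac (2*i) (2*k)) ` QQ k" using he by auto
    show "(\<lambda>i. fac i (k+1)) ` QQ (k+1) \<subseteq> ?ho ` (\<lambda>i. fac (2*i+1) (2*k)) ` QQ (k+1)" using ho by auto
  qed (use k in simp)
  show "card ((\<lambda>i. fac i k) ` PP k) + card ((\<lambda>i. fac i (k+1)) ` PP (k+1)) \<le> card ((\<lambda>i. fac i (2*k)) ` QQ (2*k))"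
  proof (rule combine[OF fin_sub _ disjY[of "2*k" "PP k" "PP (k+1)"]])
    show "(\<lambda>i. fac (2*i) (2*k)) ` PP k \<union> (\<lambda>i. fac (2*i+1) (2*k)) ` PP (k+1) \<subseteq> (\<lambda>i. fac i (2*k)) ` QQ (2*k)"
    proof -
      have "2*i \<in> QQ (2*k)" if "i \<in> PP k" for i
      proof -
        have "tmf (2*i) = tmf i" using tmf_even .
        moreover have "tmf (2*i+2*k-1) = 1 - tmf (i+k-1)" using tmf_od2[of i "k-1"] ix1 by simp
        ultimately show ?thesis using that tmf_01[of i] tmf_01[of "i+k-1"] unfolding PP_def QQ_def by auto
      qed
      moreover have "2*i+1 \<in> QQ (2*k)" if "i \<in> PP (k+1)" for i
      proof -
        have "tmf (2*i+1) = 1 - tmf i" using tmf_odd .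
        moreover have "tmf (2*i+1+2*k-1) = tmf (i+k)" using tmf_ev2[of i k] ix2 by simp
        ultimately show ?thesis using that tmf_01[of i] tmf_01[of "i+k"] unfolding PP_def QQ_def by auto
      qed
      ultimately show ?thesis by blast
    qed
    show "(\<lambda>i. fac i k) ` PP k \<subseteq> ?he ` (\<lambda>i. fac (2*i) (2*k)) ` PP k" using he by auto
    show "(\<lambda>i. fac i (k+1)) ` PP (k+1) \<subseteq> ?ho ` (\<lambda>i. fac (2*i+1) (2*k)) ` PP (k+1)" using ho by auto
  qed (use k in simp)
qed

lemma odd_step:
  assumes k: "k \<ge> 2"
  shows "card ((\<lambda>i. fac i (k+1)) ` PP (k+1)) + card ((\<lambda>i. fac i (k+1)) ` PP (k+1)) \<le> card ((\<lambda>i. fac i (2*k+1)) ` PP (2*k+1))"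
   and "card ((\<lambda>i. fac i (k+1)) ` QQ (k+1)) + card ((\<lambda>i. fac i (k+1)) ` QQ (k+1)) \<le> card ((\<lambda>i. fac i (2*k+1)) ` QQ (2*k+1))"
proof -
  let ?he = "\<lambda>W. map (\<lambda>j. W ! (2*j)) [0..<k+1]"
  let ?ho = "\<lambda>W. map (\<lambda>j. 1 - W ! (2*j)) [0..<k+1]"
  have he: "fac i (k+1) = ?he (fac (2*i) (2*k+1))" for i
    by (rule nth_equalityI) (simp_all add: tmf_ev2 del: upt_Suc)
  have ho: "fac i (k+1) = ?ho (fac (2*i+1) (2*k+1))" for i
  proof (rule nth_equalityI)
    fix j assume "j < length (fac i (k+1))"
    then have j: "j < k+1" by simp
    have "2*i+1+2*j = 2*i+2*j+1" by simp
    moreover have "?ho (fac (2*i+1) (2*k+1)) ! j = 1 - fac (2*i+1) (2*k+1) ! (2*j)"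
      using j by (subst nth_map_upt) auto
    ultimately show "fac i (k+1) ! j = ?ho (fac (2*i+1) (2*k+1)) ! j"
      using j tmf_01[of "i+j"] tmf_od2[of i j] by auto
  qed simp
  show "card ((\<lambda>i. fac i (k+1)) ` PP (k+1)) + card ((\<lambda>i. fac i (k+1)) ` PP (k+1)) \<le> card ((\<lambda>i. fac i (2*k+1)) ` PP (2*k+1))"
  proof (rule combine[OF fin_sub _ disjY[of "2*k+1" "PP (k+1)" "PP (k+1)"]])
    show "(\<lambda>i. fac (2*i) (2*k+1)) ` PP (k+1) \<union> (\<lambda>i. fac (2*i+1) (2*k+1)) ` PP (k+1) \<subseteq> (\<lambda>i. fac i (2*k+1)) ` PP (2*k+1)"
    proof -
      have "2*i \<in> PP (2*k+1)" if "i \<in> PP (k+1)" for i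
      proof -
        have "tmf (2*i) = tmf i" using tmf_even .
        moreover have "tmf (2*i+(2*k+1)-1) = tmf (i+k)" using tmf_ev2[of i k] by simp
        ultimately show ?thesis using that unfolding PP_def QQ_def by auto
      qed
      moreover have "2*i+1 \<in> PP (2*k+1)" if "i \<in> PP (k+1)" for i
      proof -
        have "tmf (2*i+1) = 1 - tmf i" using tmf_odd .
        moreover have "tmf (2*i+1+(2*k+1)-1) = 1 - tmf (i+k)" using tmf_od2[of i k] by simp
        ultimately show ?thesis using that tmf_01[of i] tmf_01[of "i+k"] unfolding PP_def QQ_def by auto
      qed
      ultimately show ?thesis by blast
    qed
    show "(\<lambda>i. fac i (k+1)) ` PP (k+1) \<subseteq> ?he ` (\<lambda>i. fac (2*i) (2*k+1)) ` PP (k+1)" using he by auto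
    show "(\<lambda>i. fac i (k+1)) ` PP (k+1) \<subseteq> ?ho ` (\<lambda>i. fac (2*i+1) (2*k+1)) ` PP (k+1)" using ho by auto
  qed (use k in simp)
  show "card ((\<lambda>i. fac i (k+1)) ` QQ (k+1)) + card ((\<lambda>i. fac i (k+1)) ` QQ (k+1)) \<le> card ((\<lambda>i. fac i (2*k+1)) ` QQ (2*k+1))"
  proof (rule combine[OF fin_sub _ disjY[of "2*k+1" "QQ (k+1)" "QQ (k+1)"]])
    show "(\<lambda>i. fac (2*i) (2*k+1)) ` QQ (k+1) \<union> (\<lambda>i. fac (2*i+1) (2*k+1)) ` QQ (k+1) \<subseteq> (\<lambda>i. fac i (2*k+1)) ` QQ (2*k+1)"
    proof -
      have "2*i \<in> QQ (2*k+1)" if "i \<in> QQ (k+1)" for i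
      proof -
        have "tmf (2*i) = tmf i" using tmf_even .
        moreover have "tmf (2*i+(2*k+1)-1) = tmf (i+k)" using tmf_ev2[of i k] by simp
        ultimately show ?thesis using that unfolding PP_def QQ_def by auto
      qed
      moreover have "2*i+1 \<in> QQ (2*k+1)" if "i \<in> QQ (k+1)" for i
      proof -
        have "tmf (2*i+1) = 1 - tmf i" using tmf_odd .
        moreover have "tmf (2*i+1+(2*k+1)-1) = 1 - tmf (i+k)" using tmf_od2[of i k] by simp
        ultimately show ?thesis using that tmf_01[of i] tmf_01[of "i+k"] unfolding PP_def QQ_def by auto
      qed
      ultimately show ?thesis by blast
    qed
    show "(\<lambda>i. fac i (k+1)) ` QQ (k+1) \<subseteq> ?he ` (\<lambda>i. fac (2*i) (2*k+1)) ` QQ (k+1)" using he by auto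
    show "(\<lambda>i. fac i (k+1)) ` QQ (k+1) \<subseteq> ?ho ` (\<lambda>i. fac (2*i+1) (2*k+1)) ` QQ (k+1)" using ho by auto
  qed (use k in simp)
qed

lemma two_le: assumes "n \<ge> 1" "a \<in> X" "b \<in> X" "tmf a \<noteq> tmf b"
  shows "2 \<le> card ((\<lambda>i. fac i n) ` X)"
proof -
  have "0 < n" using assms(1) by simp
  then have "fac a n \<noteq> fac b n" using assms(4) fac_nth[of 0 n a] fac_nth[of 0 n b] by force
  then have "card {fac a n, fac b n} = 2" by simp
  moreover have "{fac a n, fac b n} \<subseteq> (\<lambda>i. fac i n) ` X" using assms by auto
  ultimately show ?thesis using card_mono[OF fin_sub] by metis
qed

lemma one_le: assumes "a \<in> X" shows "1 \<le> card ((\<lambda>i. fac i n) ` X)"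
  using assms fin_sub[of n X] by (metis One_nat_def Suc_leI card_gt_0_iff empty_iff image_eqI)

lemma vals: "tmf 0 = 0" "tmf 1 = 1" "tmf 2 = 1" "tmf 3 = 0" "tmf 4 = 1" "tmf 5 = 0"
proof -
  show a: "tmf 0 = 0" by (simp add: tmf.simps)
  show b: "tmf 1 = 1" using tmf_odd[of 0] a by simp
  show c: "tmf 2 = 1" using tmf_even[of 1] b by simp
  show "tmf 3 = 0" using tmf_odd[of 1] b by simp
  show "tmf 4 = 1" using tmf_even[of 2] c by simp
  show "tmf 5 = 0" using tmf_odd[of 2] c by simp
qed

lemma main: "n \<ge> 2 \<Longrightarrow> card ((\<lambda>i. fac i n) ` PP n) \<ge> n - 1 \<and> card ((\<lambda>i. fac i n) ` QQ n) \<ge> n - 1"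
proof (induction n rule: less_induct)
  case (less n)
  consider "n = 2" | "n = 3" | "n \<ge> 4" using less.prems by linarith
  then show ?case
  proof cases
    case 1
    have "tmf (Suc 0) = 1" "tmf (Suc (Suc 0)) = 1" using vals by (simp_all add: numeral_2_eq_2)
    then have "1 \<in> PP 2" "0 \<in> QQ 2" by (simp_all add: PP_def QQ_def vals)
    then show ?thesis using 1 one_le by auto
  next
    case 2
    have "tmf (Suc 0) = 1" "tmf (Suc (Suc 0)) = 1" "tmf (Suc (Suc (Suc 0))) = 0" using vals by (simp_all add: numeral_2_eq_2 numeral_3_eq_3)
    then have "2 \<in> PP 3" "3 \<in> PP 3" "0 \<in> QQ 3" "1 \<in> QQ 3" by (simp_all add: PP_def QQ_def vals)
    then show ?thesis using 2 two_le[of 3 2 "PP 3" 3] two_le[of 3 0 "QQ 3" 1] vals by auto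
  next
    case 3
    show ?thesis
    proof (cases "even n")
      case True
      then obtain k where n: "n = 2*k" by blast
      have k: "k \<ge> 2" using 3 n by simp
      have "card ((\<lambda>i. fac i k) ` PP k) \<ge> k - 1 \<and> card ((\<lambda>i. fac i k) ` QQ k) \<ge> k - 1"
        using less.IH[of k] k n by simp
      moreover have "card ((\<lambda>i. fac i (k+1)) ` PP (k+1)) \<ge> k \<and> card ((\<lambda>i. fac i (k+1)) ` QQ (k+1)) \<ge> k"
        using less.IH[of "k+1"] k n by simp
      ultimately show ?thesis unfolding n using even_step[OF k] k by linarith
    next
      case False
      then obtain k where n: "n = 2*k+1" using oddE by blast
      have k: "k \<ge> 2" using 3 n by simp
      have "card ((\<lambda>i. fac i (k+1)) ` PP (k+1)) \<ge> k \<and> card ((\<lambda>i. fac i (k+1)) ` QQ (k+1)) \<ge> k"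
        using less.IH[of "k+1"] k n by simp
      then show ?thesis unfolding n using odd_step[OF k] k by linarith
    qed
  qed
qed

theorem corollary1:
  fixes n :: nat
  assumes "n \<ge> 2"
  shows "f_aa n \<ge> n - 1 \<and> f_ab n \<ge> n - 1"
  using main[OF assms] f_aa_eq f_ab_eq assms by simp

end
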